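(* Let $K\ge 1$, let $V=V_1\sqcup\cdots\sqcup V_K$ be a finite vertex set with $|V_i|=n_i$, let $b:V\to\{1,\dots,K\}$ be the block membership function ($b(v)=i$ iff $v\in V_i$), and let $\Lambda\in(0,1)^{K\times K}$ be a symmetric matrix. Let $V=S\sqcup A$ (seeds $S$, ambiguous vertices $A$), with $m_i=|S\cap V_i|$, $m=\sum_i m_i$, $n=\sum_i n_i$, and assume $n_1-m_1\ge 1$. Then for every vertex nomination scheme $\mathcal{L}$ (in the sense defined in the context), the canonical vertex nomination scheme $\mathcal{L}^C$ satisfies $$MAP(\mathcal{L}^C)\ \ge\ MAP(\mathcal{L}),$$ where both mean average precisions are computed with respect to $\mathbf{G}\sim \mathrm{SBM}(K,\vec n,b,\Lambda)$.
   Context: SBM: A random graph $\mathbf{G}$ on $V$ is $\mathrm{SBM}(K,\vec n,b,\Lambda)$ if, for each unordered pair $\{u,v\}$ of distinct vertices, the edge $u\sim v$ is present independently with probability $\Lambda_{b(u),b(v)}$. Vertex nomination scheme: Let $\mathcal{G}$ be the set of all (simple, undirected) graphs on vertex set $V=S\sqcup A$, and suppose $S$, $A$ and the restriction $b|_S$ are given. A vertex nomination scheme is a function $\mathcal{L}$ assigning to each $G\in\mathcal{G}$ an ordering $(\mathcal{L}_{G,1},\dots,\mathcal{L}_{G,n-m})$ of $A$ (the nomination list), subject to: (i) every graph with a nontrivial automorphism is assigned the empty nomination list; (ii) for any asymmetric $G,H\in\mathcal{G}$ and any isomorphism $\gamma:G\to H$ that is the identity on $S$, $\gamma(\mathcal{L}_{G,i})=\mathcal{L}_{H,i}$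 for all $i$. Mean average precision: $MAP(\mathcal{L})=\mathbb{E}\Big(\frac{1}{n_1-m_1}\sum_{j=1}^{n_1-m_1}\frac{|\{i:1\le i\le j,\ b(\mathcal{L}_{\mathbf{G},i})=1\}|}{j}\Big)$, the expectation over $\mathbf{G}\sim\mathrm{SBM}(K,\vec n,b,\Lambda)$ (positions absent from an empty list contribute nothing). Canonical scheme: Let $\Phi$ be the set of functions $\varphi:V\to\{1,\dots,K\}$ with $\varphi(v)=b(v)$ for all $v\in S$ and $|\{v:\varphi(v)=i\}|=n_i$ for all $i$. For $G\in\mathcal{G}$ and $\varphi\in\Phi$, let $e^{G,\varphi}_{i,j}$ be the number of edges of $G$ with one endpoint mapped by $\varphi$ to $i$ and the other to $j$, and $c^{G,\varphi}_{i,j}=n_in_j-e^{G,\varphi}_{i,j}$ for $i\ne j$, $c^{G,\varphi}_{i,i}=\binom{n_i}{2}-e^{G,\varphi}_{i,i}$. Define for $v\in A$ $$\mathbb{Q}(\phi(v)=1\mid G)=\frac{\sum_{\varphi\in\Phi:\varphi(v)=1}\prod_{i=1}^K\prod_{j=i}^K\Lambda_{i,j}^{e^{G,\varphi}_{i,j}}(1-\Lambda_{i,j})^{c^{G,\varphi}_{i,j}}}{\sum_{\varphi\in\Phi}\prod_{i=1}^K\prod_{j=i}^K\Lambda_{i,j}^{e^{G,\varphi}_{i,j}}(1-\Lambda_{i,j})^{c^{G,\varphi}_{i,j}}},$$ i.e. the posterior probability that $v$ is in block 1 when $\varphi$ is drawn uniformly from $\Phi$ and then $G\sim\mathrm{SBM}(K,\vec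 n,\varphi,\Lambda)$. The canonical scheme $\mathcal{L}^C$ is the vertex nomination scheme which (for asymmetric $G$) lists the vertices of $A$ in nonincreasing order of $\mathbb{Q}(\phi(v)=1\mid G)$, ties broken arbitrarily. *)

theory Defs
  imports Complex_Main
begin

text \<open>Blocks are numbered 1..K (type nat); vertices have an arbitrary type 'v;
  the vertex set is a finite set V. A simple undirected graph on V is a set of
  2-element subsets of V (its edge set).\<close>

definition vpairs :: "'v set \<Rightarrow> 'v set set" where
  "vpairs V = {e. \<exists>u\<in>V. \<exists>w\<in>V. u \<noteq> w \<and> e = {u, w}}"

definition graphs :: "'v set \<Rightarrow> 'v set set set" where
  "graphs V = Pow (vpairs V)"

definition bsize :: "'v set \<Rightarrow> ('v \<Rightarrow> nat) \<Rightarrow> nat \<Rightarrow> nat" where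
  "bsize V b i = card {v\<in>V. b v = i}"

definition edge_prob :: "('v \<Rightarrow> nat) \<Rightarrow> (nat \<Rightarrow> nat \<Rightarrow> real) \<Rightarrow> 'v set \<Rightarrow> real" where
  "edge_prob b \<Lambda> e = \<Lambda> (Min (b ` e)) (Max (b ` e))"

definition sbm_prob :: "'v set \<Rightarrow> ('v \<Rightarrow> nat) \<Rightarrow> (nat \<Rightarrow> nat \<Rightarrow> real) \<Rightarrow> 'v set set \<Rightarrow> real" where
  "sbm_prob V b \<Lambda> G =
     (\<Prod>e\<in>vpairs V. if e \<in> G then edge_prob b \<Lambda> e else 1 - edge_prob b \<Lambda> e)"

definition is_iso :: "'v set \<Rightarrow> ('v \<Rightarrow> 'v) \<Rightarrow> 'v set set \<Rightarrow> 'v set set \<Rightarrow> bool" where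
  "is_iso V \<gamma> G H \<longleftrightarrow> bij_betw \<gamma> V V \<and> (\<lambda>e. \<gamma> ` e) ` G = H"

definition has_nontriv_aut :: "'v set \<Rightarrow> 'v set set \<Rightarrow> bool" where
  "has_nontriv_aut V G \<longleftrightarrow> (\<exists>\<sigma>. is_iso V \<sigma> G G \<and> (\<exists>v\<in>V. \<sigma> v \<noteq> v))"

definition is_vn_scheme ::
  "'v set \<Rightarrow> 'v set \<Rightarrow> 'v set \<Rightarrow> ('v set set \<Rightarrow> 'v list) \<Rightarrow> bool" where
  "is_vn_scheme V S A L \<longleftrightarrow>
     (\<forall>G\<in>graphs V. if has_nontriv_aut V G then L G = []
                    else distinct (L G) \<and> set (L G) = A) \<and>
     (\<forall>G\<in>graphs V. \<forall>H\<in>graphs V. \<forall>\<gamma>.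
        \<not> has_nontriv_aut V G \<longrightarrow> \<not> has_nontriv_aut V H \<longrightarrow>
        is_iso V \<gamma> G H \<longrightarrow> (\<forall>v\<in>S. \<gamma> v = v) \<longrightarrow>
        map \<gamma> (L G) = L H)"

text \<open>Average precision of a list, with r = n_1 - m_1; list positions are 0-based,
  positions absent from the list contribute nothing.\<close>
definition avg_prec :: "('v \<Rightarrow> nat) \<Rightarrow> nat \<Rightarrow> 'v list \<Rightarrow> real" where
  "avg_prec b r xs =
     (1 / real r) * (\<Sum>j=1..r. real (card {i. i < j \<and> i < length xs \<and> b (xs ! i) = 1}) / real j)"

definition MAP ::
  "'v set \<Rightarrow> 'v set \<Rightarrow> ('v \<Rightarrow> nat) \<Rightarrow> (nat \<Rightarrow> nat \<Rightarrow> real) \<Rightarrow> ('v set set \<Rightarrow> 'v list) \<Rightarrow> real" where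
  "MAP V S b \<Lambda> L =
     (\<Sum>G\<in>graphs V. sbm_prob V b \<Lambda> G *
        avg_prec b (bsize V b 1 - card {v\<in>S. b v = 1}) (L G))"

text \<open>The set Phi of admissible block assignments (functions V -> {1..K}, taken
  to be 0 outside V so that Phi is finite).\<close>
definition Phi :: "nat \<Rightarrow> 'v set \<Rightarrow> 'v set \<Rightarrow> ('v \<Rightarrow> nat) \<Rightarrow> ('v \<Rightarrow> nat) set" where
  "Phi K V S b = {\<phi>. (\<forall>v\<in>V. \<phi> v \<in> {1..K}) \<and> (\<forall>v. v \<notin> V \<longrightarrow> \<phi> v = 0) \<and>
       (\<forall>v\<in>S. \<phi> v = b v) \<and> (\<forall>i\<in>{1..K}. card {v\<in>V. \<phi> v = i} = bsize V b i)}"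

definition ecount :: "'v set set \<Rightarrow> ('v \<Rightarrow> nat) \<Rightarrow> nat \<Rightarrow> nat \<Rightarrow> nat" where
  "ecount G \<phi> i j = card {e\<in>G. \<phi> ` e = {i, j}}"

definition ccount :: "'v set \<Rightarrow> ('v \<Rightarrow> nat) \<Rightarrow> 'v set set \<Rightarrow> ('v \<Rightarrow> nat) \<Rightarrow> nat \<Rightarrow> nat \<Rightarrow> nat" where
  "ccount V b G \<phi> i j =
     (if i \<noteq> j then bsize V b i * bsize V b j - ecount G \<phi> i j
      else (bsize V b i choose 2) - ecount G \<phi> i i)"

definition lik :: "nat \<Rightarrow> 'v set \<Rightarrow> ('v \<Rightarrow> nat) \<Rightarrow> (nat \<Rightarrow> nat \<Rightarrow> real) \<Rightarrow> 'v set set \<Rightarrow> ('v \<Rightarrow> nat) \<Rightarrow> real" where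
  "lik K V b \<Lambda> G \<phi> =
     (\<Prod>i=1..K. \<Prod>j=i..K. \<Lambda> i j ^ ecount G \<phi> i j * (1 - \<Lambda> i j) ^ ccount V b G \<phi> i j)"

definition Qpost :: "nat \<Rightarrow> 'v set \<Rightarrow> 'v set \<Rightarrow> ('v \<Rightarrow> nat) \<Rightarrow> (nat \<Rightarrow> nat \<Rightarrow> real) \<Rightarrow> 'v set set \<Rightarrow> 'v \<Rightarrow> real" where
  "Qpost K V S b \<Lambda> G v =
     (\<Sum>\<phi>\<in>{\<phi>\<in>Phi K V S b. \<phi> v = 1}. lik K V b \<Lambda> G \<phi>) /
     (\<Sum>\<phi>\<in>Phi K V S b. lik K V b \<Lambda> G \<phi>)"

definition is_canonical_scheme ::
  "nat \<Rightarrow> 'v set \<Rightarrow> 'v set \<Rightarrow> 'v set \<Rightarrow> ('v \<Rightarrow> nat) \<Rightarrow> (nat \<Rightarrow> nat \<Rightarrow> real) \<Rightarrow> ('v set set \<Rightarrow> 'v list) \<Rightarrow> bool" where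
  "is_canonical_scheme K V S A b \<Lambda> L \<longleftrightarrow> is_vn_scheme V S A L \<and>
     (\<forall>G\<in>graphs V. \<not> has_nontriv_aut V G \<longrightarrow>
        sorted_wrt (\<lambda>u w. Qpost K V S b \<Lambda> G w \<le> Qpost K V S b \<Lambda> G u) (L G))"

end

theory Submission
  imports Defs
begin

abbreviation gimg :: "('v \<Rightarrow> 'v) \<Rightarrow> 'v set set \<Rightarrow> 'v set set" where
  "gimg \<sigma> G \<equiv> (\<lambda>e. \<sigma> ` e) ` G"

lemma vpairs_sub: "e \<in> vpairs V \<Longrightarrow> e \<subseteq> V"
  unfolding vpairs_def by auto

lemma finite_vpairs: "finite V \<Longrightarrow> finite (vpairs V)"
  by (rule finite_subset[of _ "Pow V"]) (auto simp: vpairs_def)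

lemma finite_graphs: "finite V \<Longrightarrow> finite (graphs V)"
  by (simp add: graphs_def finite_vpairs)

lemma graphs_edge: "G \<in> graphs V \<Longrightarrow> e \<in> G \<Longrightarrow> e \<in> vpairs V"
  unfolding graphs_def by auto

locale perm =
  fixes V :: "'v set" and \<sigma> \<sigma>' :: "'v \<Rightarrow> 'v"
  assumes m1: "\<And>x. x \<in> V \<Longrightarrow> \<sigma> x \<in> V" and m2: "\<And>x. x \<in> V \<Longrightarrow> \<sigma>' x \<in> V"
    and i1: "\<And>x. x \<in> V \<Longrightarrow> \<sigma>' (\<sigma> x) = x" and i2: "\<And>x. x \<in> V \<Longrightarrow> \<sigma> (\<sigma>' x) = x"
begin

lemma sym: "perm V \<sigma>' \<sigma>"
  by unfold_locales (auto simp: m1 m2 i1 i2)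

lemma bij: "bij_betw \<sigma> V V"
  by (rule bij_betw_byWitness[where f'=\<sigma>']) (auto simp: m1 m2 i1 i2)

lemma img_img: "e \<subseteq> V \<Longrightarrow> \<sigma>' ` \<sigma> ` e = e"
proof -
  assume "e \<subseteq> V"
  then have "\<forall>x\<in>e. \<sigma>' (\<sigma> x) = x" using i1 by auto
  then show ?thesis by (simp add: image_image)
qed

lemma img_vpairs: assumes "e \<in> vpairs V" shows "\<sigma> ` e \<in> vpairs V"
proof -
  obtain u w where uw: "u\<in>V" "w\<in>V" "u\<noteq>w" "e={u,w}" using assms by (auto simp: vpairs_def)
  have "\<sigma> u \<noteq> \<sigma> w" using i1 uw by metis
  then show ?thesis using uw m1 unfolding vpairs_def by auto
qed

lemma gimg_graphs: "G \<in> graphs V \<Longrightarrow> gimg \<sigma> G \<in> graphs V"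
  unfolding graphs_def by (auto intro!: img_vpairs)

lemma gimg_gimg: "G \<in> graphs V \<Longrightarrow> gimg \<sigma>' (gimg \<sigma> G) = G"
proof -
  assume G: "G \<in> graphs V"
  have "\<forall>e\<in>G. \<sigma>' ` \<sigma> ` e = e"
  proof
    fix e assume "e \<in> G"
    then have "e \<subseteq> V" by (rule vpairs_sub[OF graphs_edge[OF G]])
    then show "\<sigma>' ` \<sigma> ` e = e" by (rule img_img)
  qed
  then show ?thesis by (simp add: image_image)
qed

lemma iso: "G \<in> graphs V \<Longrightarrow> is_iso V \<sigma> G (gimg \<sigma> G)"
  unfolding is_iso_def using bij by auto

lemma nontriv: assumes G: "G \<in> graphs V" and h: "has_nontriv_aut V G"
  shows "has_nontriv_aut V (gimg \<sigma> G)"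
proof -
  obtain \<tau> v where t: "is_iso V \<tau> G G" and v: "v \<in> V" "\<tau> v \<noteq> v"
    using h unfolding has_nontriv_aut_def by auto
  have bt: "bij_betw \<tau> V V" and tG: "gimg \<tau> G = G" using t unfolding is_iso_def by auto
  define \<rho> where "\<rho> = \<sigma> \<circ> \<tau> \<circ> \<sigma>'"
  have b': "bij_betw \<sigma>' V V" using perm.bij[OF sym] .
  have "bij_betw (\<sigma> \<circ> (\<tau> \<circ> \<sigma>')) V V"
    by (rule bij_betw_trans[OF bij_betw_trans[OF b' bt] bij])
  then have "bij_betw \<rho> V V" unfolding \<rho>_def by (simp add: o_assoc)
  moreover have "gimg \<rho> (gimg \<sigma> G) = gimg \<sigma> G"
  proof -
    have "gimg \<rho> (gimg \<sigma> G) = gimg \<sigma> (gimg \<tau> (gimg \<sigma>' (gimg \<sigma> G)))"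
      unfolding \<rho>_def by (simp add: image_image image_comp)
    also have "\<dots> = gimg \<sigma> G" using gimg_gimg[OF G] tG by simp
    finally show ?thesis .
  qed
  moreover have "\<rho> (\<sigma> v) \<noteq> \<sigma> v"
  proof
    assume "\<rho> (\<sigma> v) = \<sigma> v"
    then have "\<sigma> (\<tau> v) = \<sigma> v" unfolding \<rho>_def using i1 v by simp
    then have "\<sigma>' (\<sigma> (\<tau> v)) = \<sigma>' (\<sigma> v)" by simp
    then show False using i1 v bt bij_betwE by fastforce
  qed
  ultimately have "is_iso V \<rho> (gimg \<sigma> G) (gimg \<sigma> G) \<and> \<sigma> v \<in> V \<and> \<rho> (\<sigma> v) \<noteq> \<sigma> v"
    unfolding is_iso_def using m1 v by simp
  then show ?thesis unfolding has_nontriv_aut_def by blast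
qed

lemma nontriv_iff: "G \<in> graphs V \<Longrightarrow> has_nontriv_aut V (gimg \<sigma> G) \<longleftrightarrow> has_nontriv_aut V G"
proof
  assume G: "G \<in> graphs V" and h: "has_nontriv_aut V (gimg \<sigma> G)"
  have "has_nontriv_aut V (gimg \<sigma>' (gimg \<sigma> G))"
    by (rule perm.nontriv[OF sym gimg_graphs[OF G] h])
  then show "has_nontriv_aut V G" using gimg_gimg[OF G] by simp
qed (rule nontriv)

lemma gimg_mem: assumes G: "G \<in> graphs V" and e: "e \<subseteq> V"
  shows "\<sigma> ` e \<in> gimg \<sigma> G \<longleftrightarrow> e \<in> G"
proof
  assume "\<sigma> ` e \<in> gimg \<sigma> G"
  then obtain e' where "e' \<in> G" "\<sigma> ` e = \<sigma> ` e'" by auto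
  then have "\<sigma>' ` \<sigma> ` e = \<sigma>' ` \<sigma> ` e'" by simp
  then show "e \<in> G" using img_img e \<open>e' \<in> G\<close> graphs_edge[OF G] vpairs_sub by metis
qed auto

lemma sum_graphs: "sum (\<lambda>G. h (gimg \<sigma> G)) (graphs V) = sum h (graphs V)"
proof -
  have "bij_betw (gimg \<sigma>) (graphs V) (graphs V)"
    by (rule bij_betw_byWitness[where f'="gimg \<sigma>'"])
      (auto simp: gimg_gimg perm.gimg_gimg[OF sym] gimg_graphs perm.gimg_graphs[OF sym])
  then show ?thesis by (rule sum.reindex_bij_betw)
qed

lemma sbm: assumes G: "G \<in> graphs V" and phi: "\<And>v. v \<in> V \<Longrightarrow> \<phi> v = b (\<sigma> v)"
  shows "sbm_prob V \<phi> \<Lambda> G = sbm_prob V b \<Lambda> (gimg \<sigma> G)"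
proof -
  let ?F = "\<lambda>H b e. if e \<in> H then edge_prob b \<Lambda> e else 1 - edge_prob b \<Lambda> e"
  have bv: "bij_betw (\<lambda>e. \<sigma> ` e) (vpairs V) (vpairs V)"
    by (rule bij_betw_byWitness[where f'="\<lambda>e. \<sigma>' ` e"])
      (auto simp: img_vpairs perm.img_vpairs[OF sym] img_img perm.img_img[OF sym] vpairs_sub)
  have "sbm_prob V b \<Lambda> (gimg \<sigma> G) = (\<Prod>e\<in>vpairs V. ?F (gimg \<sigma> G) b (\<sigma> ` e))"
    unfolding sbm_prob_def by (rule prod.reindex_bij_betw[OF bv, symmetric])
  also have "\<dots> = (\<Prod>e\<in>vpairs V. ?F G \<phi> e)"
  proof (rule prod.cong[OF refl])
    fix e assume e: "e \<in> vpairs V"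
    then have eV: "e \<subseteq> V" by (rule vpairs_sub)
    have "b ` \<sigma> ` e = (\<lambda>x. b (\<sigma> x)) ` e" by (simp add: image_image)
    also have "\<dots> = \<phi> ` e" using phi eV by (auto intro!: image_cong)
    finally have "b ` \<sigma> ` e = \<phi> ` e" .
    then have "edge_prob b \<Lambda> (\<sigma> ` e) = edge_prob \<phi> \<Lambda> e" unfolding edge_prob_def by simp
    then show "?F (gimg \<sigma> G) b (\<sigma> ` e) = ?F G \<phi> e" using gimg_mem[OF G eV] by simp
  qed
  finally show ?thesis unfolding sbm_prob_def by simp
qed

end

lemma exists_perm:
  assumes fin: "finite V" and SA: "S \<union> A = V" "S \<inter> A = {}"
    and bV: "\<forall>v\<in>V. b v \<in> {1..K}" and phi: "\<phi> \<in> Phi K V S b"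
  shows "\<exists>\<sigma> \<sigma>'. perm V \<sigma> \<sigma>' \<and> (\<forall>v\<in>V. \<phi> v = b (\<sigma> v)) \<and> (\<forall>v\<in>S. \<sigma> v = v)"
proof -
  have pV: "\<forall>v\<in>V. \<phi> v \<in> {1..K}" and pS: "\<forall>v\<in>S. \<phi> v = b v"
    and pc: "\<forall>i\<in>{1..K}. card {v\<in>V. \<phi> v = i} = bsize V b i"
    using phi unfolding Phi_def by auto
  have finA: "finite A" and finS: "finite S" using fin SA by auto
  have cardA: "card {v\<in>A. \<phi> v = i} = card {v\<in>A. b v = i}" for i
  proof (cases "i \<in> {1..K}")
    case True
    have e1: "{v\<in>V. \<phi> v = i} = {v\<in>S. b v = i} \<union> {v\<in>A. \<phi> v = i}" using SA pS by auto
    have e2: "{v\<in>V. b v = i} = {v\<in>S. b v = i} \<union> {v\<in>A. b v = i}" using SA by auto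
    have "card {v\<in>V. \<phi> v = i} = card {v\<in>S. b v = i} + card {v\<in>A. \<phi> v = i}"
      unfolding e1 by (rule card_Un_disjoint) (use finA finS SA in auto)
    moreover have "card {v\<in>V. b v = i} = card {v\<in>S. b v = i} + card {v\<in>A. b v = i}"
      unfolding e2 by (rule card_Un_disjoint) (use finA finS SA in auto)
    moreover have "card {v\<in>V. \<phi> v = i} = card {v\<in>V. b v = i}"
      using pc True unfolding bsize_def by auto
    ultimately show ?thesis by simp
  next
    case False
    then have "{v\<in>A. \<phi> v = i} = {}" "{v\<in>A. b v = i} = {}" using pV bV SA by auto
    then show ?thesis by (simp only:)
  qed
  have "\<forall>i. \<exists>h. bij_betw h {v\<in>A. \<phi> v = i} {v\<in>A. b v = i}"
    using cardA finA by (auto intro!: finite_same_card_bij)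
  then obtain g where g: "\<And>i. bij_betw (g i) {v\<in>A. \<phi> v = i} {v\<in>A. b v = i}"
    using choice by metis
  define \<sigma> where "\<sigma> v = (if v \<in> A then g (\<phi> v) v else v)" for v
  have sA: "\<sigma> v \<in> A \<and> b (\<sigma> v) = \<phi> v" if "v \<in> A" for v
  proof -
    have "g (\<phi> v) v \<in> {w\<in>A. b w = \<phi> v}" using bij_betwE[OF g] that by blast
    then show ?thesis using that unfolding \<sigma>_def by simp
  qed
  have sS: "\<sigma> v = v" if "v \<in> S" for v using that SA unfolding \<sigma>_def by auto
  have sub: "\<sigma> ` V \<subseteq> V" using sA sS SA by auto
  have inj: "inj_on \<sigma> V"
  proof (rule inj_onI)
    fix u w assume u: "u \<in> V" and w: "w \<in> V" and eq: "\<sigma> u = \<sigma> w"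
    show "u = w"
    proof (cases "u \<in> A")
      case uA: True
      show ?thesis
      proof (cases "w \<in> A")
        case True
        then have "\<phi> u = \<phi> w" using sA uA eq by metis
        then have "g (\<phi> u) u = g (\<phi> u) w" using eq uA True unfolding \<sigma>_def by simp
        moreover have "inj_on (g (\<phi> u)) {v\<in>A. \<phi> v = \<phi> u}" using g bij_betw_def by blast
        ultimately show ?thesis using uA True \<open>\<phi> u = \<phi> w\<close> by (auto dest: inj_onD)
      next
        case False
        then have "w \<in> S" using w SA by auto
        then show ?thesis using sA[OF uA] sS eq SA by auto
      qed
    next
      case False
      then have uS: "u \<in> S" using u SA by auto
      show ?thesis
      proof (cases "w \<in> A")
        case True
        then show ?thesis using sA[OF True] sS[OF uS] eq SA uS by auto
      next
        case False
        then show ?thesis using sS uS w SA eq by auto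
      qed
    qed
  qed
  have im: "\<sigma> ` V = V" by (rule endo_inj_surj[OF fin sub inj])
  define \<sigma>' where "\<sigma>' = inv_into V \<sigma>"
  have "perm V \<sigma> \<sigma>'"
  proof
    show "\<And>x. x \<in> V \<Longrightarrow> \<sigma> x \<in> V" using sub by auto
    show "\<And>x. x \<in> V \<Longrightarrow> \<sigma>' x \<in> V" unfolding \<sigma>'_def using im by (metis inv_into_into)
    show "\<And>x. x \<in> V \<Longrightarrow> \<sigma>' (\<sigma> x) = x" unfolding \<sigma>'_def using inj by (simp add: inv_into_f_f)
    show "\<And>x. x \<in> V \<Longrightarrow> \<sigma> (\<sigma>' x) = x" unfolding \<sigma>'_def using im by (metis f_inv_into_f)
  qed
  moreover have "\<forall>v\<in>V. \<phi> v = b (\<sigma> v)"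
  proof
    fix v assume "v \<in> V"
    then show "\<phi> v = b (\<sigma> v)" using sA sS pS SA by (cases "v \<in> A") auto
  qed
  ultimately show ?thesis using sS by blast
qed


lemma minmax_pair: "(i::nat) \<le> j \<Longrightarrow> ((min a b, max a b) = (i,j)) = ({a,b} = {i,j})"
  by (auto simp: doubleton_eq_iff min_def max_def)

lemma vpairs_phi: fixes \<phi> :: "'v \<Rightarrow> nat" assumes "e \<in> vpairs V"
  obtains u w where "u \<in> V" "w \<in> V" "u \<noteq> w" "e = {u,w}"
    "Min (\<phi> ` e) = min (\<phi> u) (\<phi> w)" "Max (\<phi> ` e) = max (\<phi> u) (\<phi> w)" "\<phi> ` e = {\<phi> u, \<phi> w}"
proof -
  obtain u w where "u \<in> V" "w \<in> V" "u \<noteq> w" "e = {u,w}" using assms by (auto simp: vpairs_def)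
  then show ?thesis using that by auto
qed

lemma class_eq: fixes \<phi> :: "'v \<Rightarrow> nat" assumes "e \<in> vpairs V" "(i::nat) \<le> j"
  shows "((Min (\<phi> ` e), Max (\<phi> ` e)) = (i,j)) = (\<phi> ` e = {i,j})"
proof -
  obtain u w where "Min (\<phi> ` e) = min (\<phi> u) (\<phi> w)" "Max (\<phi> ` e) = max (\<phi> u) (\<phi> w)" "\<phi> ` e = {\<phi> u, \<phi> w}"
    by (rule vpairs_phi[OF assms(1), of \<phi>])
  then show ?thesis using minmax_pair[OF assms(2)] by simp
qed

lemma card_class_lt: fixes \<phi> :: "'v \<Rightarrow> nat" assumes fin: "finite V" and ij: "(i::nat) < j"
  shows "card {e\<in>vpairs V. \<phi> ` e = {i,j}} = card {v\<in>V. \<phi> v = i} * card {v\<in>V. \<phi> v = j}"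
proof -
  let ?Vi = "{v\<in>V. \<phi> v = i}" and ?Vj = "{v\<in>V. \<phi> v = j}"
  have eq: "{e\<in>vpairs V. \<phi> ` e = {i,j}} = (\<lambda>(u,w). {u,w}) ` (?Vi \<times> ?Vj)"
  proof (rule set_eqI, rule iffI)
    fix e assume e: "e \<in> {e\<in>vpairs V. \<phi> ` e = {i,j}}"
    then have e': "e \<in> vpairs V" by simp
    obtain u w where uw: "u \<in> V" "w \<in> V" "u \<noteq> w" "e = {u,w}"
      "Min (\<phi> ` e) = min (\<phi> u) (\<phi> w)" "Max (\<phi> ` e) = max (\<phi> u) (\<phi> w)" "\<phi> ` e = {\<phi> u, \<phi> w}"
      by (rule vpairs_phi[OF e'])
    then have "{\<phi> u, \<phi> w} = {i,j}" using e by simp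
    then have "(\<phi> u = i \<and> \<phi> w = j) \<or> (\<phi> u = j \<and> \<phi> w = i)" by (auto simp: doubleton_eq_iff)
    then show "e \<in> (\<lambda>(u,w). {u,w}) ` (?Vi \<times> ?Vj)"
    proof
      assume "\<phi> u = i \<and> \<phi> w = j" then show ?thesis using uw by (auto intro!: image_eqI[of _ _ "(u,w)"])
    next
      assume "\<phi> u = j \<and> \<phi> w = i" then show ?thesis using uw by (auto intro!: image_eqI[of _ _ "(w,u)"])
    qed
  next
    fix e assume "e \<in> (\<lambda>(u,w). {u,w}) ` (?Vi \<times> ?Vj)"
    then obtain u w where uw: "u \<in> ?Vi" "w \<in> ?Vj" "e = {u,w}" by auto
    then have "u \<noteq> w" "u \<in> V" "w \<in> V" "\<phi> ` e = {i,j}" using ij by auto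
    then show "e \<in> {e\<in>vpairs V. \<phi> ` e = {i,j}}" unfolding vpairs_def using uw(3) by blast
  qed
  have inj: "inj_on (\<lambda>(u,w). {u,w}) (?Vi \<times> ?Vj)"
    using ij by (auto simp: inj_on_def doubleton_eq_iff)
  show ?thesis unfolding eq card_image[OF inj] card_cartesian_product ..
qed

lemma card_class_eq: fixes \<phi> :: "'v \<Rightarrow> nat" assumes fin: "finite V"
  shows "card {e\<in>vpairs V. \<phi> ` e = {i,i}} = card {v\<in>V. \<phi> v = i} choose 2"
proof -
  have eq: "{e\<in>vpairs V. \<phi> ` e = {i,i}} = {B. B \<subseteq> {v\<in>V. \<phi> v = i} \<and> card B = 2}"
  proof (rule set_eqI, rule iffI)
    fix e assume e: "e \<in> {e\<in>vpairs V. \<phi> ` e = {i,i}}"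
    then have e': "e \<in> vpairs V" by simp
    obtain u w where uw: "u \<in> V" "w \<in> V" "u \<noteq> w" "e = {u,w}"
      "Min (\<phi> ` e) = min (\<phi> u) (\<phi> w)" "Max (\<phi> ` e) = max (\<phi> u) (\<phi> w)" "\<phi> ` e = {\<phi> u, \<phi> w}"
      by (rule vpairs_phi[OF e'])
    then show "e \<in> {B. B \<subseteq> {v\<in>V. \<phi> v = i} \<and> card B = 2}" using e by auto
  next
    fix e assume "e \<in> {B. B \<subseteq> {v\<in>V. \<phi> v = i} \<and> card B = 2}"
    then obtain u w where "e = {u,w}" "u \<noteq> w" "e \<subseteq> {v\<in>V. \<phi> v = i}"
      by (auto simp: card_2_iff)
    then show "e \<in> {e\<in>vpairs V. \<phi> ` e = {i,i}}" unfolding vpairs_def by auto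
  qed
  show ?thesis unfolding eq by (rule n_subsets) (use fin in auto)
qed


lemma lik_sbm:
  fixes \<phi> :: "'v \<Rightarrow> nat"
  assumes fin: "finite V" and pV: "\<forall>v\<in>V. \<phi> v \<in> {1..K}"
    and pc: "\<forall>i\<in>{1..K}. card {v\<in>V. \<phi> v = i} = bsize V b i" and G: "G \<in> graphs V"
  shows "sbm_prob V \<phi> \<Lambda> G = lik K V b \<Lambda> G \<phi>"
proof -
  let ?I = "Sigma {1..K} (\<lambda>i. {i..K})"
  let ?g = "\<lambda>e. (Min (\<phi> ` e), Max (\<phi> ` e))"
  let ?F = "\<lambda>e. if e \<in> G then edge_prob \<phi> \<Lambda> e else 1 - edge_prob \<phi> \<Lambda> e"
  have gI: "?g ` vpairs V \<subseteq> ?I"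
  proof
    fix y assume "y \<in> ?g ` vpairs V"
    then obtain e where e: "e \<in> vpairs V" "y = ?g e" by blast
    obtain u w where uw: "u \<in> V" "w \<in> V" "u \<noteq> w" "e = {u,w}"
      "Min (\<phi> ` e) = min (\<phi> u) (\<phi> w)" "Max (\<phi> ` e) = max (\<phi> u) (\<phi> w)" "\<phi> ` e = {\<phi> u, \<phi> w}"
      by (rule vpairs_phi[OF e(1)])
    have "\<phi> u \<in> {1..K}" "\<phi> w \<in> {1..K}" using pV uw by auto
    then show "y \<in> ?I" using e(2) uw(5,6) by auto
  qed
  have "sbm_prob V \<phi> \<Lambda> G = (\<Prod>y\<in>?I. \<Prod>e\<in>{x. x \<in> vpairs V \<and> ?g x = y}. ?F e)"
    unfolding sbm_prob_def by (rule prod.group[symmetric]) (use finite_vpairs[OF fin] gI in auto)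
  also have "\<dots> = (\<Prod>(i,j)\<in>?I. \<Lambda> i j ^ ecount G \<phi> i j * (1 - \<Lambda> i j) ^ ccount V b G \<phi> i j)"
  proof (rule prod.cong[OF refl])
    fix y assume "y \<in> ?I"
    then obtain i j where y: "y = (i,j)" and ij: "1 \<le> i" "i \<le> j" "j \<le> K" by auto
    define C where "C = {e\<in>vpairs V. \<phi> ` e = {i,j}}"
    have finC: "finite C" unfolding C_def using finite_vpairs[OF fin] by auto
    have Ceq: "{x. x \<in> vpairs V \<and> ?g x = (i,j)} = C"
      unfolding C_def using class_eq[of _ V i j \<phi>] ij by auto
    have FC: "?F e = (if e \<in> G then \<Lambda> i j else 1 - \<Lambda> i j)" if "e \<in> C" for e
    proof -
      have "\<phi> ` e = {i,j}" using that unfolding C_def by simp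
      then have "edge_prob \<phi> \<Lambda> e = \<Lambda> i j" unfolding edge_prob_def using ij by (simp add: min_def max_def)
      then show ?thesis by simp
    qed
    have "(\<Prod>e\<in>C. ?F e) = (\<Prod>e\<in>C. if e \<in> G then \<Lambda> i j else 1 - \<Lambda> i j)"
      by (rule prod.cong[OF refl]) (rule FC)
    also have "\<dots> = \<Lambda> i j ^ card (C \<inter> {e. e \<in> G}) * (1 - \<Lambda> i j) ^ card (C \<inter> - {e. e \<in> G})"
      by (simp add: prod.If_cases[OF finC])
    finally have P: "(\<Prod>e\<in>C. ?F e) = \<Lambda> i j ^ card (C \<inter> {e. e \<in> G}) * (1 - \<Lambda> i j) ^ card (C \<inter> - {e. e \<in> G})" .
    have e1: "card (C \<inter> {e. e \<in> G}) = ecount G \<phi> i j"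
    proof -
      have "C \<inter> {e. e \<in> G} = {e\<in>G. \<phi> ` e = {i,j}}" unfolding C_def using graphs_edge[OF G] by auto
      then show ?thesis unfolding ecount_def by simp
    qed
    have "C \<inter> - {e. e \<in> G} = C - (C \<inter> {e. e \<in> G})" by auto
    then have e2: "card (C \<inter> - {e. e \<in> G}) = card C - card (C \<inter> {e. e \<in> G})"
      using finC by (simp add: card_Diff_subset)
    have e3: "card C = (if i \<noteq> j then bsize V b i * bsize V b j else bsize V b i choose 2)"
    proof (cases "i = j")
      case True
      then show ?thesis unfolding C_def using card_class_eq[OF fin, of \<phi> i] pc ij by auto
    next
      case False
      then have "i < j" using ij by simp
      then show ?thesis unfolding C_def using card_class_lt[OF fin, of i j \<phi>] pc ij False by auto
    qed
    have "ccount V b G \<phi> i j = card (C \<inter> - {e. e \<in> G})"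
      unfolding ccount_def e2 e1 e3 by simp
    then show "(\<Prod>e\<in>{x. x \<in> vpairs V \<and> ?g x = y}. ?F e) =
      (case y of (i,j) \<Rightarrow> \<Lambda> i j ^ ecount G \<phi> i j * (1 - \<Lambda> i j) ^ ccount V b G \<phi> i j)"
      using P e1 Ceq y by simp
  qed
  also have "\<dots> = lik K V b \<Lambda> G \<phi>"
    unfolding lik_def by (rule prod.Sigma[symmetric]) auto
  finally show ?thesis .
qed


lemma prefix_major:
  fixes f :: "'a \<Rightarrow> real"
  assumes srt: "sorted_wrt (\<lambda>u w. f w \<le> f u) ys" and T: "T \<subseteq> set ys"
    and cT: "card T = card (set (take j ys))"
  shows "sum f T \<le> sum f (set (take j ys))"
proof -
  define P where "P = set (take j ys)"
  have finT: "finite T" using T finite_subset by blast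
  have finP: "finite P" unfolding P_def by simp
  have cmp: "f x \<le> f y" if x: "x \<in> T - P" and y: "y \<in> P - T" for x y
  proof -
    have "set ys = set (take j ys) \<union> set (drop j ys)"
      by (metis append_take_drop_id set_append)
    then have xd: "x \<in> set (drop j ys)" using x T unfolding P_def by auto
    have "sorted_wrt (\<lambda>u w. f w \<le> f u) (take j ys @ drop j ys)" using srt by simp
    then have "\<forall>a\<in>set (take j ys). \<forall>b\<in>set (drop j ys). f b \<le> f a"
      unfolding sorted_wrt_append by blast
    then show ?thesis using xd y unfolding P_def by blast
  qed
  have c1: "card (T - P) = card T - card (T \<inter> P)" using finT by (simp add: card_Diff_subset_Int)
  have c2: "card (P - T) = card P - card (P \<inter> T)" using finP by (simp add: card_Diff_subset_Int)
  have ceq: "card (T - P) = card (P - T)" using c1 c2 cT unfolding P_def by (simp add: Int_commute)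
  have key: "sum f (T - P) \<le> sum f (P - T)"
  proof (cases "card (T - P) = 0")
    case True
    then have h1: "T - P = {}" using finT by simp
    have h2: "P - T = {}" using True ceq finP by simp
    show ?thesis unfolding h1 h2 by simp
  next
    case False
    let ?k = "real (card (T - P))"
    have "?k * sum f (T - P) = (\<Sum>y\<in>P - T. \<Sum>x\<in>T - P. f x)" using ceq by simp
    also have "\<dots> \<le> (\<Sum>y\<in>P - T. \<Sum>x\<in>T - P. f y)"
      by (intro sum_mono) (use cmp in auto)
    also have "\<dots> = ?k * sum f (P - T)" by (simp add: sum_distrib_left)
    finally have "?k * sum f (T - P) \<le> ?k * sum f (P - T)" .
    moreover have "?k > 0" using False by simp
    ultimately show ?thesis by simp
  qed
  have "sum f T = sum f (T \<inter> P) + sum f (T - P)" by (rule sum.Int_Diff[OF finT])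
  moreover have "sum f P = sum f (P \<inter> T) + sum f (P - T)" by (rule sum.Int_Diff[OF finP])
  ultimately show ?thesis using key unfolding P_def by (simp add: Int_commute)
qed


lemma card_ind: "real (card {i. i < j \<and> i < length xs \<and> \<phi> (xs ! i) = (1::nat)}) =
   (\<Sum>i<min j (length xs). if \<phi> (xs ! i) = 1 then 1 else 0)"
proof -
  have "{i. i < j \<and> i < length xs \<and> \<phi> (xs ! i) = 1} = {i\<in>{..<min j (length xs)}. \<phi> (xs ! i) = 1}" by auto
  moreover have "(\<Sum>i<min j (length xs). if \<phi> (xs ! i) = 1 then 1 else 0) =
     sum (\<lambda>_. 1::real) {i\<in>{..<min j (length xs)}. \<phi> (xs ! i) = 1}"
    by (rule sum.inter_filter[symmetric]) simp
  ultimately show ?thesis by simp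
qed

lemma ap_sum:
  fixes \<Phi> :: "('v \<Rightarrow> nat) set" and p :: "('v \<Rightarrow> nat) \<Rightarrow> real"
  shows "(\<Sum>\<phi>\<in>\<Phi>. p \<phi> * avg_prec \<phi> r xs) =
    (1 / real r) * (\<Sum>j=1..r. (\<Sum>i<min j (length xs). (\<Sum>\<phi>\<in>\<Phi>. p \<phi> * (if \<phi> (xs ! i) = 1 then 1 else 0))) / real j)"
proof -
  have "(\<Sum>\<phi>\<in>\<Phi>. p \<phi> * avg_prec \<phi> r xs) = (\<Sum>\<phi>\<in>\<Phi>. \<Sum>j=1..r. \<Sum>i<min j (length xs).
     p \<phi> * (if \<phi> (xs ! i) = 1 then 1 else 0) / (real r * real j))"
    unfolding avg_prec_def card_ind by (simp add: sum_distrib_left sum_divide_distrib mult.assoc)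
  also have "\<dots> = (\<Sum>j=1..r. \<Sum>i<min j (length xs). \<Sum>\<phi>\<in>\<Phi>.
     p \<phi> * (if \<phi> (xs ! i) = 1 then 1 else 0) / (real r * real j))"
    by (subst sum.swap) (rule sum.cong[OF refl], rule sum.swap)
  also have "\<dots> = (1 / real r) * (\<Sum>j=1..r. (\<Sum>i<min j (length xs). (\<Sum>\<phi>\<in>\<Phi>. p \<phi> * (if \<phi> (xs ! i) = 1 then 1 else 0))) / real j)"
    by (simp add: sum_distrib_left sum_divide_distrib)
  finally show ?thesis .
qed

lemma sum_take: "distinct xs \<Longrightarrow> (\<Sum>i<min j (length xs). W (xs ! i)) = sum W (set (take j xs))"
proof -
  assume d: "distinct xs"
  have "sum W (set (take j xs)) = sum_list (map W (take j xs))"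
    using d by (simp add: sum.distinct_set_conv_list)
  also have "\<dots> = (\<Sum>i<length (take j xs). W (take j xs ! i))"
    by (simp add: sum_list_sum_nth atLeast0LessThan)
  also have "\<dots> = (\<Sum>i<min j (length xs). W (xs ! i))" by (simp add: min.commute)
  finally show ?thesis by simp
qed


lemma avg_map: "\<forall>v\<in>set xs. \<phi> v = b (\<sigma> v) \<Longrightarrow> avg_prec b r (map \<sigma> xs) = avg_prec \<phi> r xs"
proof -
  assume h: "\<forall>v\<in>set xs. \<phi> v = b (\<sigma> v)"
  have "{i. i < j \<and> i < length (map \<sigma> xs) \<and> b (map \<sigma> xs ! i) = 1} = {i. i < j \<and> i < length xs \<and> \<phi> (xs ! i) = 1}" for j
    using h nth_mem by fastforce
  then show ?thesis unfolding avg_prec_def by simp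
qed

lemma map_inv:
  assumes fin: "finite V" and SA: "S \<union> A = V" "S \<inter> A = {}"
    and bV: "\<forall>v\<in>V. b v \<in> {1..K}" and phi: "\<phi> \<in> Phi K V S b"
    and X: "is_vn_scheme V S A X"
  shows "(\<Sum>G\<in>graphs V. sbm_prob V \<phi> \<Lambda> G * avg_prec \<phi> r (X G)) =
         (\<Sum>G\<in>graphs V. sbm_prob V b \<Lambda> G * avg_prec b r (X G))"
proof -
  obtain \<sigma> \<sigma>' where p: "perm V \<sigma> \<sigma>'" and pb: "\<forall>v\<in>V. \<phi> v = b (\<sigma> v)" and pS: "\<forall>v\<in>S. \<sigma> v = v"
    using exists_perm[OF fin SA bV phi] by blast
  interpret perm V \<sigma> \<sigma>' by (rule p)
  have X1: "\<And>G. G \<in> graphs V \<Longrightarrow> has_nontriv_aut V G \<Longrightarrow> X G = []"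
    and X2: "\<And>G. G \<in> graphs V \<Longrightarrow> \<not> has_nontriv_aut V G \<Longrightarrow> distinct (X G) \<and> set (X G) = A"
    using X unfolding is_vn_scheme_def by (metis (full_types))+
  have X3: "\<And>G H \<gamma>. G \<in> graphs V \<Longrightarrow> H \<in> graphs V \<Longrightarrow> \<not> has_nontriv_aut V G \<Longrightarrow> \<not> has_nontriv_aut V H \<Longrightarrow>
        is_iso V \<gamma> G H \<Longrightarrow> (\<forall>v\<in>S. \<gamma> v = v) \<Longrightarrow> map \<gamma> (X G) = X H"
    using X unfolding is_vn_scheme_def by blast
  have "(\<Sum>G\<in>graphs V. sbm_prob V \<phi> \<Lambda> G * avg_prec \<phi> r (X G)) =
        (\<Sum>G\<in>graphs V. sbm_prob V b \<Lambda> (gimg \<sigma> G) * avg_prec b r (X (gimg \<sigma> G)))"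
  proof (rule sum.cong[OF refl])
    fix G assume G: "G \<in> graphs V"
    have s: "sbm_prob V \<phi> \<Lambda> G = sbm_prob V b \<Lambda> (gimg \<sigma> G)" using sbm[OF G] pb by blast
    have G': "gimg \<sigma> G \<in> graphs V" by (rule gimg_graphs[OF G])
    have "avg_prec \<phi> r (X G) = avg_prec b r (X (gimg \<sigma> G))"
    proof (cases "has_nontriv_aut V G")
      case True
      then have "has_nontriv_aut V (gimg \<sigma> G)" using nontriv_iff[OF G] by simp
      then show ?thesis using X1[OF G True] X1[OF G'] unfolding avg_prec_def by simp
    next
      case False
      then have F': "\<not> has_nontriv_aut V (gimg \<sigma> G)" using nontriv_iff[OF G] by simp
      have "map \<sigma> (X G) = X (gimg \<sigma> G)" by (rule X3[OF G G' False F' iso[OF G] pS])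
      moreover have "\<forall>v\<in>set (X G). \<phi> v = b (\<sigma> v)" using X2[OF G False] SA pb by auto
      ultimately show ?thesis using avg_map by metis
    qed
    then show "sbm_prob V \<phi> \<Lambda> G * avg_prec \<phi> r (X G) = sbm_prob V b \<Lambda> (gimg \<sigma> G) * avg_prec b r (X (gimg \<sigma> G))"
      using s by simp
  qed
  also have "\<dots> = (\<Sum>G\<in>graphs V. sbm_prob V b \<Lambda> G * avg_prec b r (X G))"
    by (rule sum_graphs)
  finally show ?thesis .
qed

lemma sbm_pos:
  fixes \<phi> :: "'v \<Rightarrow> nat"
  assumes pV: "\<forall>v\<in>V. \<phi> v \<in> {1..K}" and fin: "finite V"
    and L: "\<forall>i\<in>{1..K}. \<forall>j\<in>{1..K}. 0 < \<Lambda> i j \<and> \<Lambda> i j < 1"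
  shows "sbm_prob V \<phi> \<Lambda> G > 0"
  unfolding sbm_prob_def
proof (rule prod_pos)
  fix e assume e: "e \<in> vpairs V"
  obtain u w where uw: "u \<in> V" "w \<in> V" "u \<noteq> w" "e = {u,w}"
    "Min (\<phi> ` e) = min (\<phi> u) (\<phi> w)" "Max (\<phi> ` e) = max (\<phi> u) (\<phi> w)" "\<phi> ` e = {\<phi> u, \<phi> w}"
    by (rule vpairs_phi[OF e])
  have "min (\<phi> u) (\<phi> w) \<in> {1..K}" "max (\<phi> u) (\<phi> w) \<in> {1..K}" using pV uw(1,2) by (auto simp: min_def max_def)
  then have "0 < edge_prob \<phi> \<Lambda> e \<and> edge_prob \<phi> \<Lambda> e < 1" unfolding edge_prob_def uw(5,6) using L by blast
  then show "0 < (if e \<in> G then edge_prob \<phi> \<Lambda> e else 1 - edge_prob \<phi> \<Lambda> e)" by simp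
qed

theorem theorem1:
  fixes K :: nat and V S A :: "'v set" and b :: "'v \<Rightarrow> nat"
    and \<Lambda> :: "nat \<Rightarrow> nat \<Rightarrow> real"
    and LC L :: "'v set set \<Rightarrow> 'v list"
  assumes "K \<ge> 1"
    and "finite V"
    and "\<forall>v\<in>V. b v \<in> {1..K}"
    and "\<forall>i\<in>{1..K}. \<forall>j\<in>{1..K}. 0 < \<Lambda> i j \<and> \<Lambda> i j < 1 \<and> \<Lambda> i j = \<Lambda> j i"
    and "S \<union> A = V" and "S \<inter> A = {}"
    and "bsize V b 1 - card {v\<in>S. b v = 1} \<ge> 1"
    and "is_canonical_scheme K V S A b \<Lambda> LC"
    and "is_vn_scheme V S A L"
  shows "MAP V S b \<Lambda> LC \<ge> MAP V S b \<Lambda> L"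
proof -
  note fin = assms(2) and bV = assms(3) and SA = assms(5,6)
  have Lam: "\<forall>i\<in>{1..K}. \<forall>j\<in>{1..K}. 0 < \<Lambda> i j \<and> \<Lambda> i j < 1" using assms(4) by blast
  have canon: "is_vn_scheme V S A LC"
    and srt: "\<And>G. G \<in> graphs V \<Longrightarrow> \<not> has_nontriv_aut V G \<Longrightarrow>
        sorted_wrt (\<lambda>u w. Qpost K V S b \<Lambda> G w \<le> Qpost K V S b \<Lambda> G u) (LC G)"
    using assms(8) unfolding is_canonical_scheme_def by auto
  define r where "r = bsize V b 1 - card {v\<in>S. b v = 1}"
  define \<Phi> where "\<Phi> = Phi K V S b"
  have finPhi: "finite \<Phi>"
  proof (rule finite_subset)
    show "\<Phi> \<subseteq> {f. \<forall>x. (x \<in> V \<longrightarrow> f x \<in> {0..K}) \<and> (x \<notin> V \<longrightarrow> f x = 0)}"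
      unfolding \<Phi>_def Phi_def by auto
    show "finite {f. \<forall>x. (x \<in> V \<longrightarrow> f x \<in> {0..K}) \<and> (x \<notin> V \<longrightarrow> f x = (0::nat))}"
      by (rule finite_set_of_finite_funs) (use fin in auto)
  qed
  have b0c: "card {v\<in>V. (if v \<in> V then b v else 0) = i} = bsize V b i" for i
  proof -
    have "{v\<in>V. (if v \<in> V then b v else 0) = i} = {v\<in>V. b v = i}" by auto
    then show ?thesis unfolding bsize_def by simp
  qed
  have b0: "(\<lambda>v. if v \<in> V then b v else 0) \<in> \<Phi>"
    unfolding \<Phi>_def Phi_def mem_Collect_eq
  proof (intro conjI)
    show "\<forall>i\<in>{1..K}. card {v\<in>V. (if v \<in> V then b v else 0) = i} = bsize V b i" using b0c by blast
    show "\<forall>v\<in>V. (if v \<in> V then b v else 0) \<in> {1..K}" using bV by simp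
    show "\<forall>v. v \<notin> V \<longrightarrow> (if v \<in> V then b v else 0) = 0" by simp
    show "\<forall>v\<in>S. (if v \<in> V then b v else 0) = b v" using SA by auto
  qed
  then have cPhi: "card \<Phi> > 0" using finPhi card_gt_0_iff by blast
  have phiV: "\<forall>v\<in>V. \<phi> v \<in> {1..K}" and phic: "\<forall>i\<in>{1..K}. card {v\<in>V. \<phi> v = i} = bsize V b i"
    if "\<phi> \<in> \<Phi>" for \<phi> using that unfolding \<Phi>_def Phi_def by auto
  have MAPeq: "real (card \<Phi>) * MAP V S b \<Lambda> X =
     (\<Sum>G\<in>graphs V. \<Sum>\<phi>\<in>\<Phi>. sbm_prob V \<phi> \<Lambda> G * avg_prec \<phi> r (X G))" if X: "is_vn_scheme V S A X" for X
  proof -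
    have "real (card \<Phi>) * MAP V S b \<Lambda> X = (\<Sum>\<phi>\<in>\<Phi>. MAP V S b \<Lambda> X)" by simp
    also have "\<dots> = (\<Sum>\<phi>\<in>\<Phi>. \<Sum>G\<in>graphs V. sbm_prob V \<phi> \<Lambda> G * avg_prec \<phi> r (X G))"
    proof (rule sum.cong[OF refl])
      fix \<phi> assume ph: "\<phi> \<in> \<Phi>"
      have "(\<Sum>G\<in>graphs V. sbm_prob V \<phi> \<Lambda> G * avg_prec \<phi> r (X G)) =
            (\<Sum>G\<in>graphs V. sbm_prob V b \<Lambda> G * avg_prec b r (X G))"
        by (rule map_inv[OF fin SA bV _ X]) (use ph in \<open>simp add: \<Phi>_def\<close>)
      then show "MAP V S b \<Lambda> X = (\<Sum>G\<in>graphs V. sbm_prob V \<phi> \<Lambda> G * avg_prec \<phi> r (X G))"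
        unfolding MAP_def r_def[symmetric] by simp
    qed
    also have "\<dots> = (\<Sum>G\<in>graphs V. \<Sum>\<phi>\<in>\<Phi>. sbm_prob V \<phi> \<Lambda> G * avg_prec \<phi> r (X G))"
      by (rule sum.swap)
    finally show ?thesis .
  qed
  have perG: "(\<Sum>\<phi>\<in>\<Phi>. sbm_prob V \<phi> \<Lambda> G * avg_prec \<phi> r (L G)) \<le>
              (\<Sum>\<phi>\<in>\<Phi>. sbm_prob V \<phi> \<Lambda> G * avg_prec \<phi> r (LC G))" if G: "G \<in> graphs V" for G
  proof (cases "has_nontriv_aut V G")
    case True
    then have "L G = []" "LC G = []" using assms(9) canon G unfolding is_vn_scheme_def by auto
    then show ?thesis by simp
  next
    case False
    have dL: "distinct (L G)" "set (L G) = A" using assms(9) G False unfolding is_vn_scheme_def by auto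
    have dC: "distinct (LC G)" "set (LC G) = A" using canon G False unfolding is_vn_scheme_def by auto
    define W where "W v = (\<Sum>\<phi>\<in>\<Phi>. sbm_prob V \<phi> \<Lambda> G * (if \<phi> v = 1 then 1 else 0))" for v
    define D where "D = (\<Sum>\<phi>\<in>\<Phi>. sbm_prob V \<phi> \<Lambda> G)"
    have Dpos: "D > 0" unfolding D_def
      by (rule sum_pos[OF finPhi]) (use b0 sbm_pos[OF phiV fin Lam] in auto)
    have Q: "Qpost K V S b \<Lambda> G v = W v / D" for v
    proof -
      have "(\<Sum>\<phi>\<in>{\<phi>\<in>Phi K V S b. \<phi> v = 1}. lik K V b \<Lambda> G \<phi>) = (\<Sum>\<phi>\<in>{\<phi>\<in>\<Phi>. \<phi> v = 1}. sbm_prob V \<phi> \<Lambda> G)"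
        unfolding \<Phi>_def[symmetric] using lik_sbm[OF fin phiV phic G] by (intro sum.cong) auto
      also have "\<dots> = W v" unfolding W_def by (simp add: sum.inter_filter[OF finPhi], intro sum.cong, auto)
      finally have n: "(\<Sum>\<phi>\<in>{\<phi>\<in>Phi K V S b. \<phi> v = 1}. lik K V b \<Lambda> G \<phi>) = W v" .
      have d: "(\<Sum>\<phi>\<in>Phi K V S b. lik K V b \<Lambda> G \<phi>) = D"
        unfolding D_def \<Phi>_def[symmetric] using lik_sbm[OF fin phiV phic G] by (intro sum.cong) auto
      show ?thesis unfolding Qpost_def n d ..
    qed
    have srtW: "sorted_wrt (\<lambda>u w. W w \<le> W u) (LC G)"
      using srt[OF G False] Dpos unfolding Q by (simp add: divide_le_cancel)
    have "(\<Sum>\<phi>\<in>\<Phi>. sbm_prob V \<phi> \<Lambda> G * avg_prec \<phi> r (L G)) =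
          (1 / real r) * (\<Sum>j=1..r. sum W (set (take j (L G))) / real j)"
      unfolding ap_sum W_def[symmetric] sum_take[OF dL(1)] ..
    also have "\<dots> \<le> (1 / real r) * (\<Sum>j=1..r. sum W (set (take j (LC G))) / real j)"
    proof (intro mult_left_mono sum_mono divide_right_mono)
      fix j
      have len: "length (L G) = length (LC G)" using dL dC distinct_card by metis
      have cT: "card (set (take j (L G))) = card (set (take j (LC G)))"
        using dL(1) dC(1) len by (simp add: distinct_card)
      have T: "set (take j (L G)) \<subseteq> set (LC G)"
        using set_take_subset[of j "L G"] dL(2) dC(2) by simp
      show "sum W (set (take j (L G))) \<le> sum W (set (take j (LC G)))"
        by (rule prefix_major[OF srtW T cT])
    qed auto
    also have "\<dots> = (\<Sum>\<phi>\<in>\<Phi>. sbm_prob V \<phi> \<Lambda> G * avg_prec \<phi> r (LC G))"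
      unfolding ap_sum W_def[symmetric] sum_take[OF dC(1)] ..
    finally show ?thesis .
  qed
  have "real (card \<Phi>) * MAP V S b \<Lambda> L \<le> real (card \<Phi>) * MAP V S b \<Lambda> LC"
    unfolding MAPeq[OF assms(9)] MAPeq[OF canon] by (rule sum_mono) (rule perG)
  then show ?thesis using cPhi by simp
qed

end
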